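(* Let $(A,[\cdot,\cdot],\circ)$ and $(V,[\cdot,\cdot]_V,\circ_V)$ be Malcev-Poisson algebras and $\varrho,\mu:A\to\mathrm{End}(V)$ linear maps. Then $(V,\circ_V,[\cdot,\cdot]_V,\mu,\varrho)$ is an $A$-module Malcev-Poisson algebra if and only if $A\oplus V$ is a Malcev-Poisson algebra with the operations $$\{x+a,y+b\}=[x,y]+\varrho(x)b-\varrho(y)a+[a,b]_V,\qquad (x+a)\bullet(y+b)=x\circ y+\mu(x)b+\mu(y)a+a\circ_Vb,$$ for $x,y\in A$, $a,b\in V$.
   Context: Field $\mathbb{K}$ algebraically closed, characteristic $0$; spaces finite-dimensional. Malcev algebra: antisymmetric bracket with $J(x,y,[x,z])=[J(x,y,z),x]$, $J(x,y,z)=[[x,y],z]+[[z,x],y]+[[y,z],x]$. Malcev-Poisson algebra: Malcev bracket plus commutative associative product $\circ$ with $[x,y\circ z]=[x,y]\circ z+y\circ[x,z]$. Representations: Malcev, $\varrho([[x,y],z])=\varrho(z)\varrho(y)\varrho(x)-\varrho(y)\varrho(x)\varrho(z)+\varrho(x)\varrho([y,z])+\varrho([x,z])\varrho(y)$; associative, $\mu(x\circ y)=\mu(x)\mu(y)$; Malcev-Poisson, $(V,\varrho,\mu)$ with both and $\varrho(x\circ y)=\mu(y)\varrho(x)+\mu(x)\varrho(y)$, $\mu([x,y])=\varrho(x)\mu(y)-\mu(y)\varrho(x)$. $A$-module Malcev algebra $(V,[\cdot,\cdot]_V,\varrho)$: $\varrho$ a Malcev representation and for $x,y\in A$, $a,b,c\in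 V$: $\varrho([x,y])[a,b]_V=\varrho(x)[\varrho(y)a,b]_V-[\varrho(y)\varrho(x)a,b]_V-[\varrho(x)\varrho(y)b,a]_V+\varrho(y)[\varrho(x)b,a]_V$; $[\varrho(x)a,\varrho(y)b]_V=[\varrho([x,y])a,b]_V-\varrho(x)[\varrho(y)a,b]_V+\varrho(y)\varrho(x)[a,b]_V+[\varrho(y)\varrho(x)b,a]_V$; $[\varrho(x)a,[b,c]_V]_V=[[\varrho(x)b,a]_V,c]_V-\varrho(x)[[b,a]_V,c]_V-[\varrho(x)[a,c]_V,b]_V-[[\varrho(x)c,b]_V,a]_V$. $A$-module associative algebra $(V,\circ_V,\mu)$: $\mu$ an associative representation and $\mu(x)(a\circ_Vb)=(\mu(x)a)\circ_Vb$. $A$-module Malcev-Poisson algebra $(V,\circ_V,[\cdot,\cdot]_V,\mu,\varrho)$: $(V,[\cdot,\cdot]_V,\varrho)$ an $A$-module Malcev algebra, $(V,\circ_V,\mu)$ an $A$-module associative algebra, $(V,\varrho,\mu)$ a Malcev-Poisson representation of $A$, and $\varrho(x)(a\circ_Vb)=(\varrho(x)a)\circ_Vb+a\circ_V(\varrho(x)b)$, $[a,\mu(x)b]_V=-(\varrho(x)a)\circ_Vb+\mu(x)[a,b]_V$ for all $x\in A$, $a,b\in V$. *)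

theory Defs
  imports "HOL-Library.Product_Plus" "HOL-Computational_Algebra.Polynomial"
begin

definition alg_closed :: "'k::field itself \<Rightarrow> bool" where
  "alg_closed _ \<longleftrightarrow> (\<forall>p :: 'k poly. degree p > 0 \<longrightarrow> (\<exists>z. poly p z = 0))"

definition fin_dim :: "('k::field \<Rightarrow> 'a::ab_group_add \<Rightarrow> 'a) \<Rightarrow> bool" where
  "fin_dim s \<longleftrightarrow> vector_space s \<and> (\<exists>B. finite B \<and> module.span s B = UNIV)"

definition bilin :: "('k::field \<Rightarrow> 'a::ab_group_add \<Rightarrow> 'a) \<Rightarrow> ('a \<Rightarrow> 'a \<Rightarrow> 'a) \<Rightarrow> bool" where
  "bilin s f \<longleftrightarrow> (\<forall>x. Vector_Spaces.linear s s (f x)) \<and> (\<forall>y. Vector_Spaces.linear s s (\<lambda>x. f x y))"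

definition jac :: "('a::ab_group_add \<Rightarrow> 'a \<Rightarrow> 'a) \<Rightarrow> 'a \<Rightarrow> 'a \<Rightarrow> 'a \<Rightarrow> 'a" where
  "jac br x y z = br (br x y) z + br (br z x) y + br (br y z) x"

definition malcev_algebra :: "('k::field \<Rightarrow> 'a::ab_group_add \<Rightarrow> 'a) \<Rightarrow> ('a \<Rightarrow> 'a \<Rightarrow> 'a) \<Rightarrow> bool" where
  "malcev_algebra s br \<longleftrightarrow> vector_space s \<and> bilin s br \<and>
     (\<forall>x y. br x y = - br y x) \<and>
     (\<forall>x y z. jac br x y (br x z) = br (jac br x y z) x)"

definition malcev_poisson :: "('k::field \<Rightarrow> 'a::ab_group_add \<Rightarrow> 'a) \<Rightarrow> ('a \<Rightarrow> 'a \<Rightarrow> 'a) \<Rightarrow> ('a \<Rightarrow> 'a \<Rightarrow> 'a) \<Rightarrow> bool" where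
  "malcev_poisson s br pr \<longleftrightarrow> malcev_algebra s br \<and> bilin s pr \<and>
     (\<forall>x y. pr x y = pr y x) \<and> (\<forall>x y z. pr (pr x y) z = pr x (pr y z)) \<and>
     (\<forall>x y z. br x (pr y z) = pr (br x y) z + pr y (br x z))"

definition lin_end :: "('k::field \<Rightarrow> 'a::ab_group_add \<Rightarrow> 'a) \<Rightarrow> ('k \<Rightarrow> 'v::ab_group_add \<Rightarrow> 'v) \<Rightarrow> ('a \<Rightarrow> 'v \<Rightarrow> 'v) \<Rightarrow> bool" where
  "lin_end sA sV r \<longleftrightarrow> (\<forall>x. Vector_Spaces.linear sV sV (r x)) \<and> (\<forall>a. Vector_Spaces.linear sA sV (\<lambda>x. r x a))"

definition malcev_rep where
  "malcev_rep sA brA sV r \<longleftrightarrow> lin_end sA sV r \<and>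
     (\<forall>x y z v. r (brA (brA x y) z) v =
        r z (r y (r x v)) - r y (r x (r z v)) + r x (r (brA y z) v) + r (brA x z) (r y v))"

definition assoc_rep where
  "assoc_rep sA prA sV m \<longleftrightarrow> lin_end sA sV m \<and> (\<forall>x y v. m (prA x y) v = m x (m y v))"

definition mp_rep where
  "mp_rep sA brA prA sV r m \<longleftrightarrow> malcev_rep sA brA sV r \<and> assoc_rep sA prA sV m \<and>
     (\<forall>x y v. r (prA x y) v = m y (r x v) + m x (r y v)) \<and>
     (\<forall>x y v. m (brA x y) v = r x (m y v) - m y (r x v))"

definition module_malcev where
  "module_malcev sA brA sV brV r \<longleftrightarrow> malcev_rep sA brA sV r \<and>
    (\<forall>x y a b. r (brA x y) (brV a b) =
        r x (brV (r y a) b) - brV (r y (r x a)) b - brV (r x (r y b)) a + r y (brV (r x b) a)) \<and>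
    (\<forall>x y a b. brV (r x a) (r y b) =
        brV (r (brA x y) a) b - r x (brV (r y a) b) + r y (r x (brV a b)) + brV (r y (r x b)) a) \<and>
    (\<forall>x a b c. brV (r x a) (brV b c) =
        brV (brV (r x b) a) c - r x (brV (brV b a) c) - brV (r x (brV a c)) b - brV (brV (r x c) b) a)"

definition module_assoc where
  "module_assoc sA prA sV prV m \<longleftrightarrow> assoc_rep sA prA sV m \<and>
    (\<forall>x a b. m x (prV a b) = prV (m x a) b)"

definition module_mp where
  "module_mp sA brA prA sV prV brV m r \<longleftrightarrow>
     module_malcev sA brA sV brV r \<and> module_assoc sA prA sV prV m \<and> mp_rep sA brA prA sV r m \<and>
     (\<forall>x a b. r x (prV a b) = prV (r x a) b + prV a (r x b)) \<and>
     (\<forall>x a b. brV a (m x b) = - prV (r x a) b + m x (brV a b))"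

definition sum_scale :: "('k \<Rightarrow> 'a \<Rightarrow> 'a) \<Rightarrow> ('k \<Rightarrow> 'v \<Rightarrow> 'v) \<Rightarrow> 'k \<Rightarrow> 'a \<times> 'v \<Rightarrow> 'a \<times> 'v" where
  "sum_scale sA sV c p = (sA c (fst p), sV c (snd p))"

definition sum_br :: "('a \<Rightarrow> 'a \<Rightarrow> 'a) \<Rightarrow> ('v::ab_group_add \<Rightarrow> 'v \<Rightarrow> 'v) \<Rightarrow> ('a \<Rightarrow> 'v \<Rightarrow> 'v) \<Rightarrow> 'a \<times> 'v \<Rightarrow> 'a \<times> 'v \<Rightarrow> 'a \<times> 'v" where
  "sum_br brA brV r p q = (brA (fst p) (fst q), r (fst p) (snd q) - r (fst q) (snd p) + brV (snd p) (snd q))"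

definition sum_pr :: "('a \<Rightarrow> 'a \<Rightarrow> 'a) \<Rightarrow> ('v::ab_group_add \<Rightarrow> 'v \<Rightarrow> 'v) \<Rightarrow> ('a \<Rightarrow> 'v \<Rightarrow> 'v) \<Rightarrow> 'a \<times> 'v \<Rightarrow> 'a \<times> 'v \<Rightarrow> 'a \<times> 'v" where
  "sum_pr prA prV m p q = (prA (fst p) (fst q), m (fst p) (snd q) + m (fst q) (snd p) + prV (snd p) (snd q))"

end

theory Submission imports Defs begin

definition Mop :: "('b::ab_group_add \<Rightarrow> 'b \<Rightarrow> 'b) \<Rightarrow> 'b \<Rightarrow> 'b \<Rightarrow> 'b \<Rightarrow> 'b" where
  "Mop br X Y Z = jac br X Y (br X Z) - br (jac br X Y Z) X"
definition Fop :: "('b::ab_group_add \<Rightarrow> 'b \<Rightarrow> 'b) \<Rightarrow> 'b \<Rightarrow> 'b \<Rightarrow> 'b \<Rightarrow> 'b \<Rightarrow> 'b" where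
  "Fop br X W Y Z = jac br X Y (br W Z) + jac br W Y (br X Z) - br (jac br X Y Z) W - br (jac br W Y Z) X"
definition Aop :: "('b::ab_group_add \<Rightarrow> 'b \<Rightarrow> 'b) \<Rightarrow> 'b \<Rightarrow> 'b \<Rightarrow> 'b \<Rightarrow> 'b" where
  "Aop pr X Y Z = pr (pr X Y) Z - pr X (pr Y Z)"
definition Lop :: "('b::ab_group_add \<Rightarrow> 'b \<Rightarrow> 'b) \<Rightarrow> ('b \<Rightarrow> 'b \<Rightarrow> 'b) \<Rightarrow> 'b \<Rightarrow> 'b \<Rightarrow> 'b \<Rightarrow> 'b" where
  "Lop br pr X Y Z = br X (pr Y Z) - pr (br X Y) Z - pr Y (br X Z)"

lemma addhom:
  fixes f :: "'b::ab_group_add \<Rightarrow> 'c::ab_group_add"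
  assumes "\<And>x y. f (x + y) = f x + f y"
  shows "f 0 = 0" "f (- x) = - f x" "f (x - y) = f x - f y"
proof -
  show 0: "f 0 = 0" using assms[of 0 0] by simp
  have n: "f (- z) = - f z" for z using assms[of z "- z"] 0 by (simp add: eq_neg_iff_add_eq_0 add.commute)
  then show "f (- x) = - f x" .
  show "f (x - y) = f x - f y" using assms[of x "- y"] n[of y] by simp
qed

lemma polar:
  fixes br :: "'b::ab_group_add \<Rightarrow> 'b \<Rightarrow> 'b"
  assumes l: "\<And>x y z. br (x + y) z = br x z + br y z"
    and r: "\<And>x y z. br x (y + z) = br x y + br x z"
  shows "Mop br (X + W) Y Z = Mop br X Y Z + Mop br W Y Z + Fop br X W Y Z"
    "Mop br X (Y1 + Y2) Z = Mop br X Y1 Z + Mop br X Y2 Z"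
    "Mop br X Y (Z1 + Z2) = Mop br X Y Z1 + Mop br X Y Z2"
    "Fop br X W (Y1 + Y2) Z = Fop br X W Y1 Z + Fop br X W Y2 Z"
    "Fop br X W Y (Z1 + Z2) = Fop br X W Y Z1 + Fop br X W Y Z2"
proof -
  have l0: "br 0 z = 0" for z using addhom(1)[of "\<lambda>x. br x z"] l by blast
  have r0: "br z 0 = 0" for z using addhom(1)[of "br z"] r by blast
  note s = l r l0 r0 addhom(2,3)[of "\<lambda>x. br x _", OF l] addhom(2,3)[of "br _", OF r]
  show "Mop br (X + W) Y Z = Mop br X Y Z + Mop br W Y Z + Fop br X W Y Z"
    "Mop br X (Y1 + Y2) Z = Mop br X Y1 Z + Mop br X Y2 Z"
    "Mop br X Y (Z1 + Z2) = Mop br X Y Z1 + Mop br X Y Z2"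
    "Fop br X W (Y1 + Y2) Z = Fop br X W Y1 Z + Fop br X W Y2 Z"
    "Fop br X W Y (Z1 + Z2) = Fop br X W Y Z1 + Fop br X W Y Z2"
    by (simp_all add: Mop_def Fop_def jac_def s algebra_simps)
qed

lemma half0:
  fixes s :: "'k::field_char_0 \<Rightarrow> 'b::ab_group_add \<Rightarrow> 'b" and w :: 'b
  assumes "vector_space s" "w + w = 0"
  shows "w = 0"
proof -
  interpret vector_space s by fact
  have "w = s (1::'k) w" by simp
  also have "\<dots> = s (1/2 + 1/2::'k) w" by simp
  also have "\<dots> = s (1/2::'k) (w + w)" by (simp only: scale_left_distrib scale_right_distrib)
  also have "\<dots> = 0" using assms(2) by simp
  finally show ?thesis .
qed

lemma biadd:
  fixes f :: "'a::ab_group_add \<Rightarrow> 'b::ab_group_add \<Rightarrow> 'c::ab_group_add"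
  assumes r: "\<And>x y z. f x (y + z) = f x y + f x z" and l: "\<And>x y z. f (x + y) z = f x z + f y z"
  shows "f x 0 = 0" "f 0 y = 0" "f x (- y) = - f x y" "f (- x) y = - f x y"
    "f x (y - y2) = f x y - f x y2" "f (x - x2) y = f x y - f x2 y"
  using addhom[of "f x", OF r] addhom[of "\<lambda>x. f x y", OF l] by auto

lemma bilin_rules:
  assumes "bilin s f"
  shows "f x (y + z) = f x y + f x z" "f (x + y) z = f x z + f y z"
    "f x (s c y) = s c (f x y)" "f (s c x) y = s c (f x y)"
  using assms unfolding bilin_def Vector_Spaces.linear_iff by auto

lemma lin_end_rules:
  fixes sA :: "'k::field \<Rightarrow> 'a::ab_group_add \<Rightarrow> 'a" and sV :: "'k \<Rightarrow> 'v::ab_group_add \<Rightarrow> 'v"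
    and f :: "'a \<Rightarrow> 'v \<Rightarrow> 'v"
  assumes "lin_end sA sV f"
  shows "f x (u + w) = f x u + f x w" "f (x + y) u = f x u + f y u"
    "f x (sV c u) = sV c (f x u)" "f (sA c x) u = sV c (f x u)"
  using assms unfolding lin_end_def Vector_Spaces.linear_iff by auto

locale MPS =
  fixes sA :: "'k::field_char_0 \<Rightarrow> 'a::ab_group_add \<Rightarrow> 'a"
    and sV :: "'k \<Rightarrow> 'v::ab_group_add \<Rightarrow> 'v"
    and brA prA :: "'a \<Rightarrow> 'a \<Rightarrow> 'a"
    and brV prV :: "'v \<Rightarrow> 'v \<Rightarrow> 'v"
    and r m :: "'a \<Rightarrow> 'v \<Rightarrow> 'v"
  assumes mpA: "malcev_poisson sA brA prA" and mpV: "malcev_poisson sV brV prV"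
    and linr: "lin_end sA sV r" and linm: "lin_end sA sV m"
begin

lemma vsA: "vector_space sA" using mpA by (simp add: malcev_poisson_def malcev_algebra_def)
lemma vsV: "vector_space sV" using mpV by (simp add: malcev_poisson_def malcev_algebra_def)
lemma bilbrA: "bilin sA brA" using mpA by (simp add: malcev_poisson_def malcev_algebra_def)
lemma bilbrV: "bilin sV brV" using mpV by (simp add: malcev_poisson_def malcev_algebra_def)
lemma bilprA: "bilin sA prA" using mpA by (simp add: malcev_poisson_def)
lemma bilprV: "bilin sV prV" using mpV by (simp add: malcev_poisson_def)

lemmas brA_l = bilin_rules[OF bilbrA] and brV_l = bilin_rules[OF bilbrV]
  and prA_l = bilin_rules[OF bilprA] and prV_l = bilin_rules[OF bilprV]
  and r_l = lin_end_rules[OF linr] and m_l = lin_end_rules[OF linm]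

lemmas brA_z = biadd[of brA, OF brA_l(1,2)] and brV_z = biadd[of brV, OF brV_l(1,2)]
  and prA_z = biadd[of prA, OF prA_l(1,2)] and prV_z = biadd[of prV, OF prV_l(1,2)]
  and r_z = biadd[of r, OF r_l(1,2)] and m_z = biadd[of m, OF m_l(1,2)]

lemma brA_swap: "brA x y = - brA y x" using mpA unfolding malcev_poisson_def malcev_algebra_def by blast
lemma brV_swap: "brV x y = - brV y x" using mpV unfolding malcev_poisson_def malcev_algebra_def by blast
lemma prA_comm: "prA x y = prA y x" using mpA unfolding malcev_poisson_def by blast
lemma prV_comm: "prV x y = prV y x" using mpV unfolding malcev_poisson_def by blast
lemma prA_assoc: "prA (prA x y) z = prA x (prA y z)" using mpA unfolding malcev_poisson_def by blast
lemma prV_assoc: "prV (prV x y) z = prV x (prV y z)" using mpV unfolding malcev_poisson_def by blast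
lemma brA_self: "brA x x = 0"
  by (rule half0[OF vsA]) (use brA_swap[of x x] in \<open>simp only: eq_neg_iff_add_eq_0\<close>)
lemma brV_self: "brV x x = 0"
  by (rule half0[OF vsV]) (use brV_swap[of x x] in \<open>simp only: eq_neg_iff_add_eq_0\<close>)
lemma malA: "Mop brA x y z = 0"
 proof -
  have "\<forall>x y z. jac brA x y (brA x z) = brA (jac brA x y z) x" using mpA unfolding malcev_poisson_def malcev_algebra_def by blast
  then show ?thesis by (simp add: Mop_def)
qed
lemma malV: "Mop brV x y z = 0"
 proof -
  have "\<forall>x y z. jac brV x y (brV x z) = brV (jac brV x y z) x" using mpV unfolding malcev_poisson_def malcev_algebra_def by blast
  then show ?thesis by (simp add: Mop_def)
qed

lemmas lin = brA_l(1,2) brV_l(1,2) prA_l(1,2) prV_l(1,2) r_l(1,2) m_l(1,2)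
  brA_z brV_z prA_z prV_z r_z m_z brA_self brV_self

abbreviation "SB \<equiv> sum_br brA brV r"
abbreviation "SP \<equiv> sum_pr prA prV m"

definition "d_rep x y z v = r (brA (brA x y) z) v - (r z (r y (r x v)) - r y (r x (r z v)) + r x (r (brA y z) v) + r (brA x z) (r y v))"
definition "d_arep x y v = m (prA x y) v - m x (m y v)"
definition "d_mp1 x y v = r (prA x y) v - (m y (r x v) + m x (r y v))"
definition "d_mp2 x y v = m (brA x y) v - (r x (m y v) - m y (r x v))"
definition "d_c1 x y a b = r (brA x y) (brV a b) - (r x (brV (r y a) b) - brV (r y (r x a)) b - brV (r x (r y b)) a + r y (brV (r x b) a))"
definition "d_c2 x y a b = brV (r x a) (r y b) - (brV (r (brA x y) a) b - r x (brV (r y a) b) + r y (r x (brV a b)) + brV (r y (r x b)) a)"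
definition "d_c3 x a b c = brV (r x a) (brV b c) - (brV (brV (r x b) a) c - r x (brV (brV b a) c) - brV (r x (brV a c)) b - brV (brV (r x c) b) a)"
definition "d_massoc x a b = m x (prV a b) - prV (m x a) b"
definition "d_der x a b = r x (prV a b) - (prV (r x a) b + prV a (r x b))"
definition "d_lmix x a b = brV a (m x b) - (- prV (r x a) b + m x (brV a b))"
definition "d_vmal a b c = Mop brV a b c"
definition "d_vassoc a b c = prV (prV a b) c - prV a (prV b c)"
definition "d_vleib a b c = brV a (prV b c) - (prV (brV a b) c + prV b (brV a c))"

lemmas d_defs = d_rep_def d_arep_def d_mp1_def d_mp2_def d_c1_def d_c2_def d_c3_def d_massoc_def d_der_def d_lmix_def d_vmal_def d_vassoc_def d_vleib_def

lemma d_vmal_0: "d_vmal a b c = 0" by (simp add: d_vmal_def malV)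
lemma d_vassoc_0: "d_vassoc a b c = 0" by (simp add: d_vassoc_def prV_assoc)
lemma d_vleib_0: "d_vleib a b c = 0"
  using mpV unfolding malcev_poisson_def d_vleib_def right_minus_eq by blast

lemma fst_Mop: "fst (Mop SB X Y Z) = Mop brA (fst X) (fst Y) (fst Z)"
  by (simp add: Mop_def jac_def sum_br_def)
lemma fst_Fop: "fst (Fop SB X W Y Z) = Fop brA (fst X) (fst W) (fst Y) (fst Z)"
  by (simp add: Fop_def jac_def sum_br_def)
lemma fst_Aop: "fst (Aop SP X Y Z) = Aop prA (fst X) (fst Y) (fst Z)"
  by (simp add: Aop_def sum_pr_def)
lemma fst_Lop: "fst (Lop SB SP X Y Z) = Lop brA prA (fst X) (fst Y) (fst Z)"
  by (simp add: Lop_def sum_br_def sum_pr_def)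
lemma SB_addL: "SB (p + q) w = SB p w + SB q w"
  by (simp add: sum_br_def lin algebra_simps)
lemma SB_addR: "SB w (p + q) = SB w p + SB w q"
  by (simp add: sum_br_def lin algebra_simps)
lemma SP_addL: "SP (p + q) w = SP p w + SP q w"
  by (simp add: sum_pr_def lin algebra_simps)
lemma SP_addR: "SP w (p + q) = SP w p + SP w q"
  by (simp add: sum_pr_def lin algebra_simps)
lemmas SB_polar = polar[of SB, OF SB_addL SB_addR]
lemma FA0: "Fop brA X W Y Z = 0"
  using polar(1)[of brA X W Y Z, OF brA_l(2) brA_l(1)] malA by simp

lemma sV_add: "sV c (u + w) = sV c u + sV c w" using vsV unfolding vector_space_def by blast
lemma sV_neg: "sV c (- u) = - sV c u" by (metis addhom(2) sV_add)
lemma sV_diff: "sV c (u - w) = sV c u - sV c w" by (metis addhom(3) sV_add)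

lemma pairI0: "fst p = 0 \<Longrightarrow> snd p = 0 \<Longrightarrow> p = 0"
  by (simp add: prod_eq_iff)

lemma vs_sum: "vector_space (sum_scale sA sV)"
proof -
  interpret A: vector_space sA by (rule vsA)
  interpret V: vector_space sV by (rule vsV)
  show ?thesis
    by unfold_locales (simp_all add: sum_scale_def prod_eq_iff A.scale_right_distrib
        V.scale_right_distrib A.scale_left_distrib V.scale_left_distrib)
qed

lemma SB_scaleR: "SB p (sum_scale sA sV c q) = sum_scale sA sV c (SB p q)"
  by (simp add: sum_br_def sum_scale_def brA_l(3,4) brV_l(3,4) r_l(3,4) sV_add sV_neg sV_diff)
lemma SB_scaleL: "SB (sum_scale sA sV c p) q = sum_scale sA sV c (SB p q)"
  by (simp add: sum_br_def sum_scale_def brA_l(3,4) brV_l(3,4) r_l(3,4) sV_add sV_neg sV_diff)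
lemma SP_scaleR: "SP p (sum_scale sA sV c q) = sum_scale sA sV c (SP p q)"
  by (simp add: sum_pr_def sum_scale_def prA_l(3,4) prV_l(3,4) m_l(3,4) sV_add sV_neg sV_diff)
lemma SP_scaleL: "SP (sum_scale sA sV c p) q = sum_scale sA sV c (SP p q)"
  by (simp add: sum_pr_def sum_scale_def prA_l(3,4) prV_l(3,4) m_l(3,4) sV_add sV_neg sV_diff)

lemma bil_SB: "bilin (sum_scale sA sV) SB"
proof -
  have "Vector_Spaces.linear (sum_scale sA sV) (sum_scale sA sV) (SB p)" for p
    unfolding Vector_Spaces.linear_iff using vs_sum SB_addR SB_scaleR by blast
  moreover have "Vector_Spaces.linear (sum_scale sA sV) (sum_scale sA sV) (\<lambda>p. SB p q)" for q
    unfolding Vector_Spaces.linear_iff using vs_sum SB_addL SB_scaleL by blast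
  ultimately show ?thesis unfolding bilin_def by blast
qed

lemma bil_SP: "bilin (sum_scale sA sV) SP"
proof -
  have "Vector_Spaces.linear (sum_scale sA sV) (sum_scale sA sV) (SP p)" for p
    unfolding Vector_Spaces.linear_iff using vs_sum SP_addR SP_scaleR by blast
  moreover have "Vector_Spaces.linear (sum_scale sA sV) (sum_scale sA sV) (\<lambda>p. SP p q)" for q
    unfolding Vector_Spaces.linear_iff using vs_sum SP_addL SP_scaleL by blast
  ultimately show ?thesis unfolding bilin_def by blast
qed

lemma SB_anti: "SB p q = - SB q p"
proof -
  have 1: "brA (fst p) (fst q) = - brA (fst q) (fst p)" by (rule brA_swap)
  have 2: "brV (snd p) (snd q) = - brV (snd q) (snd p)" by (rule brV_swap)
  show ?thesis by (simp add: sum_br_def prod_eq_iff 1 2 algebra_simps)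
qed

lemma SP_comm: "SP p q = SP q p"
proof -
  have 1: "prA (fst p) (fst q) = prA (fst q) (fst p)" by (rule prA_comm)
  have 2: "prV (snd p) (snd q) = prV (snd q) (snd p)" by (rule prV_comm)
  show ?thesis by (simp add: sum_pr_def prod_eq_iff 1 2 add.commute add.left_commute)
qed

lemma leibA: "brA x (prA y z) = prA (brA x y) z + prA y (brA x z)"
  using mpA unfolding malcev_poisson_def by blast


context
  assumes mm: "module_mp sA brA prA sV prV brV m r"
begin

lemma d_rep_0: "d_rep x y z v = 0"
proof -
  have "malcev_rep sA brA sV r" using mm unfolding module_mp_def module_malcev_def by blast
  then show ?thesis unfolding malcev_rep_def d_rep_def right_minus_eq by blast
qed
lemma d_arep_0: "d_arep x y v = 0"
  using mm unfolding module_mp_def module_assoc_def assoc_rep_def d_arep_def right_minus_eq by blast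
lemma d_mp1_0: "d_mp1 x y v = 0"
  using mm unfolding module_mp_def mp_rep_def d_mp1_def right_minus_eq by blast
lemma d_mp2_0: "d_mp2 x y v = 0"
  using mm unfolding module_mp_def mp_rep_def d_mp2_def right_minus_eq by blast
lemma d_c1_0: "d_c1 x y a b = 0"
  using mm unfolding module_mp_def module_malcev_def d_c1_def right_minus_eq by blast
lemma d_c2_0: "d_c2 x y a b = 0"
  using mm unfolding module_mp_def module_malcev_def d_c2_def right_minus_eq by blast
lemma d_c3_0: "d_c3 x a b c = 0"
  using mm unfolding module_mp_def module_malcev_def d_c3_def right_minus_eq by blast
lemma d_massoc_0: "d_massoc x a b = 0"
  using mm unfolding module_mp_def module_assoc_def d_massoc_def right_minus_eq by blast
lemma d_der_0: "d_der x a b = 0"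
  using mm unfolding module_mp_def  d_der_def right_minus_eq by blast
lemma d_lmix_0: "d_lmix x a b = 0"
  using mm unfolding module_mp_def  d_lmix_def right_minus_eq by blast
lemmas d_zero = d_rep_0 d_arep_0 d_mp1_0 d_mp2_0 d_c1_0 d_c2_0 d_c3_0 d_massoc_0 d_der_0 d_lmix_0 d_vmal_0 d_vassoc_0 d_vleib_0


lemma M1_AAA: "snd (Mop SB (x, 0) (y, 0) (z, 0)) = 0"
proof -
  have "snd (Mop SB (x, 0) (y, 0) (z, 0)) = 0"
    by (simp add: Mop_def Fop_def Aop_def Lop_def jac_def sum_br_def sum_pr_def d_defs  lin algebra_simps)
  then show ?thesis .
qed

lemma M1_AAV: "snd (Mop SB (x, 0) (y, 0) (0, c)) = 0"
proof -
  have "snd (Mop SB (x, 0) (y, 0) (0, c)) = - d_rep x x y c"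
    by (simp add: Mop_def Fop_def Aop_def Lop_def jac_def sum_br_def sum_pr_def d_defs  lin algebra_simps)
  also have "\<dots> = 0" by (simp add: d_zero )
  finally show ?thesis .
qed

lemma M1_AVA: "snd (Mop SB (x, 0) (0, b) (z, 0)) = 0"
proof -
  have a0: "(r x (r (brA z x) b) + r x (r (brA x z) b)) = 0" by (simp add: brA_swap[of "x" "z"] lin)
  have "snd (Mop SB (x, 0) (0, b) (z, 0)) = d_rep x x z b + d_rep x z x b + (r x (r (brA z x) b) + r x (r (brA x z) b)) + (r x (r (brA z x) b) + r x (r (brA x z) b))"
    by (simp add: Mop_def Fop_def Aop_def Lop_def jac_def sum_br_def sum_pr_def d_defs  lin algebra_simps)
  also have "\<dots> = 0" by (simp add: d_zero a0)
  finally show ?thesis .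
qed

lemma M1_AVV: "snd (Mop SB (x, 0) (0, b) (0, c)) = 0"
proof -
  have a0: "(r x (brV (r x c) b) + r x (brV b (r x c))) = 0" by (simp add: brV_swap[of "b" "r x c"] lin)
  have "snd (Mop SB (x, 0) (0, b) (0, c)) = d_c2 x x b c - (r x (brV (r x c) b) + r x (brV b (r x c)))"
    by (simp add: Mop_def Fop_def Aop_def Lop_def jac_def sum_br_def sum_pr_def d_defs  lin algebra_simps)
  also have "\<dots> = 0" by (simp add: d_zero a0)
  finally show ?thesis .
qed

lemma M1_VAA: "snd (Mop SB (0, a) (y, 0) (z, 0)) = 0"
proof -
  have "snd (Mop SB (0, a) (y, 0) (z, 0)) = d_c2 y z a a"
    by (simp add: Mop_def Fop_def Aop_def Lop_def jac_def sum_br_def sum_pr_def d_defs  lin algebra_simps)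
  also have "\<dots> = 0" by (simp add: d_zero )
  finally show ?thesis .
qed

lemma M1_VAV: "snd (Mop SB (0, a) (y, 0) (0, c)) = 0"
proof -
  have a0: "(brV (r y a) (brV a c) + brV (brV a c) (r y a)) = 0" by (simp add: brV_swap[of "brV a c" "r y a"] lin)
  have a1: "(r y (brV (brV a c) a) + r y (brV a (brV a c))) = 0" by (simp add: brV_swap[of "a" "brV a c"] lin)
  have a2: "(brV (r y (brV a c)) a + brV a (r y (brV a c))) = 0" by (simp add: brV_swap[of "a" "r y (brV a c)"] lin)
  have a3: "(brV (r y (brV c a)) a + brV (r y (brV a c)) a) = 0" by (simp add: brV_swap[of "a" "c"] lin)
  have a4: "(brV (r y (brV a c)) a + brV a (r y (brV a c))) = 0" by (simp add: brV_swap[of "a" "r y (brV a c)"] lin)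
  have a5: "(brV (r y a) (brV c a) + brV (r y a) (brV a c)) = 0" by (simp add: brV_swap[of "a" "c"] lin)
  have a6: "(brV (r y a) (brV a c) + brV (brV a c) (r y a)) = 0" by (simp add: brV_swap[of "brV a c" "r y a"] lin)
  have a7: "(r y (brV (brV c a) a) + r y (brV (brV a c) a)) = 0" by (simp add: brV_swap[of "a" "c"] lin)
  have a8: "(r y (brV (brV a c) a) + r y (brV a (brV a c))) = 0" by (simp add: brV_swap[of "a" "brV a c"] lin)
  have "snd (Mop SB (0, a) (y, 0) (0, c)) = d_c3 y a c a - (brV (r y a) (brV a c) + brV (brV a c) (r y a)) - (r y (brV (brV a c) a) + r y (brV a (brV a c))) + (brV (r y (brV a c)) a + brV a (r y (brV a c))) + (brV (r y (brV c a)) a + brV (r y (brV a c)) a) - (brV (r y (brV a c)) a + brV a (r y (brV a c))) - (brV (r y a) (brV c a) + brV (r y a) (brV a c)) + (brV (r y a) (brV a c) + brV (brV a c) (r y a)) - (r y (brV (brV c a) a) + r y (brV (brV a c) a)) + (r y (brV (brV a c) a) + r y (brV a (brV a c)))"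
    by (simp add: Mop_def Fop_def Aop_def Lop_def jac_def sum_br_def sum_pr_def d_defs  lin algebra_simps)
  also have "\<dots> = 0" by (simp add: d_zero a0 a1 a2 a3 a4 a5 a6 a7 a8)
  finally show ?thesis .
qed

lemma M1_VVA: "snd (Mop SB (0, a) (0, b) (z, 0)) = 0"
proof -
  have a0: "(brV (brV b (r z a)) a + brV a (brV b (r z a))) = 0" by (simp add: brV_swap[of "a" "brV b (r z a)"] lin)
  have a1: "(brV (brV (r z a) b) a + brV (brV b (r z a)) a) = 0" by (simp add: brV_swap[of "b" "r z a"] lin)
  have a2: "(brV (brV b (r z a)) a + brV a (brV b (r z a))) = 0" by (simp add: brV_swap[of "a" "brV b (r z a)"] lin)
  have a3: "(brV (r z a) (brV a b) + brV (brV a b) (r z a)) = 0" by (simp add: brV_swap[of "brV a b" "r z a"] lin)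
  have "snd (Mop SB (0, a) (0, b) (z, 0)) = d_c3 z a a b - (brV (brV b (r z a)) a + brV a (brV b (r z a))) - (brV (brV (r z a) b) a + brV (brV b (r z a)) a) + (brV (brV b (r z a)) a + brV a (brV b (r z a))) - (brV (r z a) (brV a b) + brV (brV a b) (r z a))"
    by (simp add: Mop_def Fop_def Aop_def Lop_def jac_def sum_br_def sum_pr_def d_defs  lin algebra_simps)
  also have "\<dots> = 0" by (simp add: d_zero a0 a1 a2 a3)
  finally show ?thesis .
qed

lemma M1_VVV: "snd (Mop SB (0, a) (0, b) (0, c)) = 0"
proof -
  have "snd (Mop SB (0, a) (0, b) (0, c)) = d_vmal a b c"
    by (simp add: Mop_def Fop_def Aop_def Lop_def jac_def sum_br_def sum_pr_def d_defs  lin algebra_simps)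
  also have "\<dots> = 0" by (simp add: d_zero )
  finally show ?thesis .
qed

lemma F1_AA: "snd (Fop SB (x, 0) (0, a) (y, 0) (z, 0)) = 0"
proof -
  have a0: "(r (brA (brA z x) y) a + r (brA (brA x z) y) a) = 0" by (simp add: brA_swap[of "x" "z"] lin)
  have a1: "(r (brA (brA x z) y) a + r (brA y (brA x z)) a) = 0" by (simp add: brA_swap[of "y" "brA x z"] lin)
  have a2: "(r y (r (brA z x) a) + r y (r (brA x z) a)) = 0" by (simp add: brA_swap[of "x" "z"] lin)
  have a3: "(r (brA y x) (r z a) + r (brA x y) (r z a)) = 0" by (simp add: brA_swap[of "x" "y"] lin)
  have "snd (Fop SB (x, 0) (0, a) (y, 0) (z, 0)) = - d_rep x y z a - d_rep y z x a - (r (brA (brA z x) y) a + r (brA (brA x z) y) a) + (r (brA (brA x z) y) a + r (brA y (brA x z)) a) - (r y (r (brA z x) a) + r y (r (brA x z) a)) - (r (brA y x) (r z a) + r (brA x y) (r z a))"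
    by (simp add: Mop_def Fop_def Aop_def Lop_def jac_def sum_br_def sum_pr_def d_defs  lin algebra_simps)
  also have "\<dots> = 0" by (simp add: d_zero a0 a1 a2 a3)
  finally show ?thesis .
qed

lemma F1_AV: "snd (Fop SB (x, 0) (0, a) (y, 0) (0, c)) = 0"
proof -
  have a0: "(brV (r y a) (r x c) + brV (r x c) (r y a)) = 0" by (simp add: brV_swap[of "r x c" "r y a"] lin)
  have a1: "(r x (r y (brV c a)) + r x (r y (brV a c))) = 0" by (simp add: brV_swap[of "a" "c"] lin)
  have a2: "(r y (r x (brV c a)) + r y (r x (brV a c))) = 0" by (simp add: brV_swap[of "a" "c"] lin)
  have "snd (Fop SB (x, 0) (0, a) (y, 0) (0, c)) = d_c1 x y a c + d_c2 x y c a - (brV (r y a) (r x c) + brV (r x c) (r y a)) - (r x (r y (brV c a)) + r x (r y (brV a c))) + (r y (r x (brV c a)) + r y (r x (brV a c)))"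
    by (simp add: Mop_def Fop_def Aop_def Lop_def jac_def sum_br_def sum_pr_def d_defs  lin algebra_simps)
  also have "\<dots> = 0" by (simp add: d_zero a0 a1 a2)
  finally show ?thesis .
qed

lemma F1_VA: "snd (Fop SB (x, 0) (0, a) (0, b) (z, 0)) = 0"
proof -
  have a0: "(brV (r (brA x z) a) b + brV b (r (brA x z) a)) = 0" by (simp add: brV_swap[of "b" "r (brA x z) a"] lin)
  have a1: "(brV (r (brA x z) b) a + brV a (r (brA x z) b)) = 0" by (simp add: brV_swap[of "a" "r (brA x z) b"] lin)
  have a2: "(brV (r (brA z x) b) a + brV (r (brA x z) b) a) = 0" by (simp add: brA_swap[of "x" "z"] lin)
  have a3: "(brV (r (brA x z) b) a + brV a (r (brA x z) b)) = 0" by (simp add: brV_swap[of "a" "r (brA x z) b"] lin)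
  have a4: "(r x (brV (r z a) b) + r x (brV b (r z a))) = 0" by (simp add: brV_swap[of "b" "r z a"] lin)
  have a5: "(r (brA x z) (brV b a) + r (brA x z) (brV a b)) = 0" by (simp add: brV_swap[of "a" "b"] lin)
  have a6: "(brV (r z a) (r x b) + brV (r x b) (r z a)) = 0" by (simp add: brV_swap[of "r x b" "r z a"] lin)
  have a7: "(brV (r (brA z x) a) b + brV (r (brA x z) a) b) = 0" by (simp add: brA_swap[of "x" "z"] lin)
  have a8: "(brV (r (brA x z) a) b + brV b (r (brA x z) a)) = 0" by (simp add: brV_swap[of "b" "r (brA x z) a"] lin)
  have "snd (Fop SB (x, 0) (0, a) (0, b) (z, 0)) = d_c1 x z b a + d_c2 z x a b + (brV (r (brA x z) a) b + brV b (r (brA x z) a)) - (brV (r (brA x z) b) a + brV a (r (brA x z) b)) - (brV (r (brA z x) b) a + brV (r (brA x z) b) a) + (brV (r (brA x z) b) a + brV a (r (brA x z) b)) + (r x (brV (r z a) b) + r x (brV b (r z a))) - (r (brA x z) (brV b a) + r (brA x z) (brV a b)) - (brV (r z a) (r x b) + brV (r x b) (r z a)) + (brV (r (brA z x) a) b + brV (r (brA x z) a) b) - (brV (r (brA x z) a) b + brV b (r (brA x z) a))"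
    by (simp add: Mop_def Fop_def Aop_def Lop_def jac_def sum_br_def sum_pr_def d_defs  lin algebra_simps)
  also have "\<dots> = 0" by (simp add: d_zero a0 a1 a2 a3 a4 a5 a6 a7 a8)
  finally show ?thesis .
qed

lemma F1_VV: "snd (Fop SB (x, 0) (0, a) (0, b) (0, c)) = 0"
proof -
  have a0: "(brV (r x b) (brV a c) + brV (brV a c) (r x b)) = 0" by (simp add: brV_swap[of "brV a c" "r x b"] lin)
  have a1: "(brV (brV b (r x c)) a + brV a (brV b (r x c))) = 0" by (simp add: brV_swap[of "a" "brV b (r x c)"] lin)
  have a2: "(brV (brV (r x c) b) a + brV (brV b (r x c)) a) = 0" by (simp add: brV_swap[of "b" "r x c"] lin)
  have a3: "(brV (brV b (r x c)) a + brV a (brV b (r x c))) = 0" by (simp add: brV_swap[of "a" "brV b (r x c)"] lin)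
  have a4: "(brV (r x (brV b c)) a + brV a (r x (brV b c))) = 0" by (simp add: brV_swap[of "a" "r x (brV b c)"] lin)
  have a5: "(r x (brV (brV a b) c) + r x (brV c (brV a b))) = 0" by (simp add: brV_swap[of "c" "brV a b"] lin)
  have a6: "(r x (brV (brV c a) b) + r x (brV (brV a c) b)) = 0" by (simp add: brV_swap[of "a" "c"] lin)
  have a7: "(r x (brV (brV a c) b) + r x (brV b (brV a c))) = 0" by (simp add: brV_swap[of "b" "brV a c"] lin)
  have a8: "(r x (brV (brV b c) a) + r x (brV a (brV b c))) = 0" by (simp add: brV_swap[of "a" "brV b c"] lin)
  have a9: "(brV (r x a) (brV b c) + brV (brV b c) (r x a)) = 0" by (simp add: brV_swap[of "brV b c" "r x a"] lin)
  have a10: "(r x (brV (brV b a) c) + r x (brV (brV a b) c)) = 0" by (simp add: brV_swap[of "a" "b"] lin)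
  have a11: "(r x (brV (brV a b) c) + r x (brV c (brV a b))) = 0" by (simp add: brV_swap[of "c" "brV a b"] lin)
  have a12: "(brV (r x a) (brV c b) + brV (r x a) (brV b c)) = 0" by (simp add: brV_swap[of "b" "c"] lin)
  have a13: "(brV (r x a) (brV b c) + brV (brV b c) (r x a)) = 0" by (simp add: brV_swap[of "brV b c" "r x a"] lin)
  have a14: "(brV (r x (brV a b)) c + brV c (r x (brV a b))) = 0" by (simp add: brV_swap[of "c" "r x (brV a b)"] lin)
  have a15: "(brV (r x b) (brV c a) + brV (r x b) (brV a c)) = 0" by (simp add: brV_swap[of "a" "c"] lin)
  have a16: "(brV (r x b) (brV a c) + brV (brV a c) (r x b)) = 0" by (simp add: brV_swap[of "brV a c" "r x b"] lin)
  have a17: "(r x (brV (brV c b) a) + r x (brV (brV b c) a)) = 0" by (simp add: brV_swap[of "b" "c"] lin)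
  have a18: "(r x (brV (brV b c) a) + r x (brV a (brV b c))) = 0" by (simp add: brV_swap[of "a" "brV b c"] lin)
  have a19: "(brV (r x (brV b a)) c + brV (r x (brV a b)) c) = 0" by (simp add: brV_swap[of "a" "b"] lin)
  have a20: "(brV (r x (brV a b)) c + brV c (r x (brV a b))) = 0" by (simp add: brV_swap[of "c" "r x (brV a b)"] lin)
  have a21: "(brV (r x c) (brV a b) + brV (brV a b) (r x c)) = 0" by (simp add: brV_swap[of "brV a b" "r x c"] lin)
  have a22: "(r x (brV (brV a c) b) + r x (brV b (brV a c))) = 0" by (simp add: brV_swap[of "b" "brV a c"] lin)
  have a23: "(brV (r x (brV c b)) a + brV (r x (brV b c)) a) = 0" by (simp add: brV_swap[of "b" "c"] lin)
  have a24: "(brV (r x (brV b c)) a + brV a (r x (brV b c))) = 0" by (simp add: brV_swap[of "a" "r x (brV b c)"] lin)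
  have "snd (Fop SB (x, 0) (0, a) (0, b) (0, c)) = - d_c3 x a b c - d_c3 x a c b - d_c3 x b c a - d_c3 x c a b + (brV (r x b) (brV a c) + brV (brV a c) (r x b)) + (brV (brV b (r x c)) a + brV a (brV b (r x c))) + (brV (brV (r x c) b) a + brV (brV b (r x c)) a) - (brV (brV b (r x c)) a + brV a (brV b (r x c))) + (brV (r x (brV b c)) a + brV a (r x (brV b c))) + (r x (brV (brV a b) c) + r x (brV c (brV a b))) + (r x (brV (brV c a) b) + r x (brV (brV a c) b)) + (r x (brV (brV c a) b) + r x (brV (brV a c) b)) - (r x (brV (brV a c) b) + r x (brV b (brV a c))) - (r x (brV (brV a c) b) + r x (brV b (brV a c))) + (r x (brV (brV b c) a) + r x (brV a (brV b c))) + (brV (r x a) (brV b c) + brV (brV b c) (r x a)) + (r x (brV (brV b a) c) + r x (brV (brV a b) c)) - (r x (brV (brV a b) c) + r x (brV c (brV a b))) + (brV (r x a) (brV c b) + brV (r x a) (brV b c)) - (brV (r x a) (brV b c) + brV (brV b c) (r x a)) + (brV (r x (brV a b)) c + brV c (r x (brV a b))) + (brV (r x b) (brV c a) + brV (r x b) (brV a c)) - (brV (r x b) (brV a c) + brV (brV a c) (r x b)) + (r x (brV (brV c b) a) + r x (brV (brV b c) a)) - (r x (brV (brV b c) a) + r x (brV a (brV b c))) + (brV (r x (brV b a)) c + brV (r x (brV a b)) c) - (brV (r x (brV a b)) c + brV c (r x (brV a b))) + (brV (r x c) (brV a b) + brV (brV a b) (r x c)) + (r x (brV (brV a c) b) +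 r x (brV b (brV a c))) + (brV (r x (brV c b)) a + brV (r x (brV b c)) a) - (brV (r x (brV b c)) a + brV a (r x (brV b c)))"
    by (simp add: Mop_def Fop_def Aop_def Lop_def jac_def sum_br_def sum_pr_def d_defs  lin algebra_simps)
  also have "\<dots> = 0" by (simp add: d_zero a0 a1 a2 a3 a4 a5 a6 a7 a8 a9 a10 a11 a12 a13 a14 a15 a16 a17 a18 a19 a20 a21 a22 a23 a24)
  finally show ?thesis .
qed

lemma A1: "snd (Aop SP (x, a) (y, b) (z, c)) = 0"
proof -
  have a0: "(m (prA z x) b - m (prA x z) b) = 0" by (simp add: prA_comm[of "x" "z"] lin)
  have a1: "(m (prA z y) a - m (prA y z) a) = 0" by (simp add: prA_comm[of "y" "z"] lin)
  have a2: "(m y (prV c a) - m y (prV a c)) = 0" by (simp add: prV_comm[of "a" "c"] lin)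
  have a3: "(prV (m y c) a - prV a (m y c)) = 0" by (simp add: prV_comm[of "a" "m y c"] lin)
  have a4: "(m z (prV b a) - m z (prV a b)) = 0" by (simp add: prV_comm[of "a" "b"] lin)
  have a5: "(prV (m z b) a - prV a (m z b)) = 0" by (simp add: prV_comm[of "a" "m z b"] lin)
  have "snd (Aop SP (x, a) (y, b) (z, c)) = d_arep x y c + d_arep x z b - d_arep z x b - d_arep z y a - d_massoc x b c - d_massoc y a c + d_massoc y c a + d_massoc z b a + d_vassoc a b c + (m (prA z x) b - m (prA x z) b) + (m (prA z y) a - m (prA y z) a) - (m y (prV c a) - m y (prV a c)) + (prV (m y c) a - prV a (m y c)) - (m z (prV b a) - m z (prV a b)) + (prV (m z b) a - prV a (m z b))"
    by (simp add: Mop_def Fop_def Aop_def Lop_def jac_def sum_br_def sum_pr_def d_defs  lin algebra_simps)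
  also have "\<dots> = 0" by (simp add: d_zero a0 a1 a2 a3 a4 a5)
  finally show ?thesis .
qed

lemma L1: "snd (Lop SB SP (x, a) (y, b) (z, c)) = 0"
proof -
  have a0: "(prV (r z a) b - prV b (r z a)) = 0" by (simp add: prV_comm[of "b" "r z a"] lin)
  have "snd (Lop SB SP (x, a) (y, b) (z, c)) = - d_mp1 y z a - d_mp2 x y c - d_mp2 x z b + d_der x b c + d_lmix y a c + d_lmix z a b + d_vleib a b c - (prV (r z a) b - prV b (r z a))"
    by (simp add: Mop_def Fop_def Aop_def Lop_def jac_def sum_br_def sum_pr_def d_defs  lin algebra_simps)
  also have "\<dots> = 0" by (simp add: d_zero a0)
  finally show ?thesis .
qed

lemma M1_AAA_f: "Mop SB (x, 0) (y, 0) (z, 0) = 0"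
  by (rule pairI0) (simp_all only: fst_Mop malA M1_AAA)
lemma M1_AAV_f: "Mop SB (x, 0) (y, 0) (0, c) = 0"
  by (rule pairI0) (simp_all only: fst_Mop malA M1_AAV)
lemma M1_AVA_f: "Mop SB (x, 0) (0, b) (z, 0) = 0"
  by (rule pairI0) (simp_all only: fst_Mop malA M1_AVA)
lemma M1_AVV_f: "Mop SB (x, 0) (0, b) (0, c) = 0"
  by (rule pairI0) (simp_all only: fst_Mop malA M1_AVV)
lemma M1_VAA_f: "Mop SB (0, a) (y, 0) (z, 0) = 0"
  by (rule pairI0) (simp_all only: fst_Mop malA M1_VAA)
lemma M1_VAV_f: "Mop SB (0, a) (y, 0) (0, c) = 0"
  by (rule pairI0) (simp_all only: fst_Mop malA M1_VAV)
lemma M1_VVA_f: "Mop SB (0, a) (0, b) (z, 0) = 0"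
  by (rule pairI0) (simp_all only: fst_Mop malA M1_VVA)
lemma M1_VVV_f: "Mop SB (0, a) (0, b) (0, c) = 0"
  by (rule pairI0) (simp_all only: fst_Mop malA M1_VVV)
lemma F1_AA_f: "Fop SB (x, 0) (0, a) (y, 0) (z, 0) = 0"
  by (rule pairI0) (simp_all only: fst_Fop FA0 F1_AA)
lemma F1_AV_f: "Fop SB (x, 0) (0, a) (y, 0) (0, c) = 0"
  by (rule pairI0) (simp_all only: fst_Fop FA0 F1_AV)
lemma F1_VA_f: "Fop SB (x, 0) (0, a) (0, b) (z, 0) = 0"
  by (rule pairI0) (simp_all only: fst_Fop FA0 F1_VA)
lemma F1_VV_f: "Fop SB (x, 0) (0, a) (0, b) (0, c) = 0"
  by (rule pairI0) (simp_all only: fst_Fop FA0 F1_VV)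

lemma Mfull: "Mop SB X Y Z = 0"
proof -
  obtain x a y b z c where e: "X = (x, 0) + (0, a)" "Y = (y, 0) + (0, b)" "Z = (z, 0) + (0, c)"
    by (cases X, cases Y, cases Z) simp
  show ?thesis by (simp only: e SB_polar) (simp only: M1_AAA_f M1_AAV_f M1_AVA_f M1_AVV_f M1_VAA_f M1_VAV_f M1_VVA_f M1_VVV_f F1_AA_f F1_AV_f F1_VA_f F1_VV_f add_0_left)
qed

lemma Afull: "Aop SP X Y Z = 0"
proof -
  obtain x a y b z c where e: "X = (x, a)" "Y = (y, b)" "Z = (z, c)"
    by (cases X, cases Y, cases Z) simp
  show ?thesis unfolding e
    by (rule pairI0) (simp_all only: fst_Aop A1 fst_conv, simp add: Aop_def prA_assoc)
qed

lemma Lfull: "Lop SB SP X Y Z = 0"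
proof -
  obtain x a y b z c where e: "X = (x, a)" "Y = (y, b)" "Z = (z, c)"
    by (cases X, cases Y, cases Z) simp
  show ?thesis unfolding e
    by (rule pairI0) (simp_all only: fst_Lop L1 fst_conv, simp add: Lop_def leibA)
qed

lemma dir1: "malcev_poisson (sum_scale sA sV) SB SP"
proof -
  have M: "jac SB x y (SB x z) = SB (jac SB x y z) x" for x y z
    using Mfull[of x y z] unfolding Mop_def right_minus_eq .
  have A: "SP (SP x y) z = SP x (SP y z)" for x y z
    using Afull[of x y z] unfolding Aop_def right_minus_eq .
  have L: "SB x (SP y z) = SP (SB x y) z + SP y (SB x z)" for x y z
    using Lfull[of x y z] unfolding Lop_def diff_diff_eq right_minus_eq .
  show ?thesis unfolding malcev_poisson_def malcev_algebra_def
    using vs_sum bil_SB bil_SP SB_anti SP_comm M A L by blast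
qed

end

context
  assumes sm: "malcev_poisson (sum_scale sA sV) SB SP"
begin

lemma Msum2: "Mop SB X Y Z = 0"
  using sm unfolding malcev_poisson_def malcev_algebra_def Mop_def right_minus_eq by blast
lemma Fsum2: "Fop SB X W Y Z = 0"
  using SB_polar(1)[of X W Y Z] by (simp add: Msum2)
lemma Asum2: "Aop SP X Y Z = 0"
  using sm unfolding malcev_poisson_def Aop_def right_minus_eq by blast
lemma Lsum2: "Lop SB SP X Y Z = 0"
  using sm unfolding malcev_poisson_def Lop_def diff_diff_eq right_minus_eq by blast
lemma snd_zero: "snd (Fop SB X W Y Z) = 0" "snd (Aop SP X Y Z) = 0" "snd (Lop SB SP X Y Z) = 0"
  by (simp_all add: Fsum2 Asum2 Lsum2)

lemma d2_rep: "d_rep x y z v = 0"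
proof (rule half0[OF vsV])
  have a0: "(r (brA z y) (r x v) + r (brA y z) (r x v)) = 0" by (simp add: brA_swap[of "y" "z"] lin)
  have a1: "(r (brA (brA z y) x) v + r (brA (brA y z) x) v) = 0" by (simp add: brA_swap[of "y" "z"] lin)
  have a2: "(r (brA (brA y z) x) v + r (brA x (brA y z)) v) = 0" by (simp add: brA_swap[of "x" "brA y z"] lin)
  have a3: "(r x (r (brA z y) v) + r x (r (brA y z) v)) = 0" by (simp add: brA_swap[of "y" "z"] lin)
  have a4: "(r z (r (brA y x) v) + r z (r (brA x y) v)) = 0" by (simp add: brA_swap[of "x" "y"] lin)
  have a5: "(r (brA (brA z x) y) v + r (brA (brA x z) y) v) = 0" by (simp add: brA_swap[of "x" "z"] lin)
  have a6: "(r (brA (brA x z) y) v + r (brA y (brA x z)) v) = 0" by (simp add: brA_swap[of "y" "brA x z"] lin)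
  have a7: "(r (brA (brA y z) x) v + r (brA x (brA y z)) v) = 0" by (simp add: brA_swap[of "x" "brA y z"] lin)
  have "d_rep x y z v + d_rep x y z v = - snd (Fop SB (x, 0) (y, 0) (z, 0) (0, v)) + snd (Fop SB (x, 0) (z, 0) (0, v) (y, 0)) - snd (Fop SB (x, 0) (0, v) (y, 0) (z, 0)) + (r (brA z y) (r x v) + r (brA y z) (r x v)) - (r (brA (brA z y) x) v + r (brA (brA y z) x) v) + (r (brA (brA y z) x) v + r (brA x (brA y z)) v) - (r x (r (brA z y) v) + r x (r (brA y z) v)) - (r z (r (brA y x) v) + r z (r (brA x y) v)) - (r (brA (brA z x) y) v + r (brA (brA x z) y) v) + (r (brA (brA x z) y) v + r (brA y (brA x z)) v) - (r (brA (brA y z) x) v + r (brA x (brA y z)) v)"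
    by (simp add: Mop_def Fop_def Aop_def Lop_def jac_def sum_br_def sum_pr_def d_defs  lin algebra_simps)
  also have "\<dots> = 0" by (simp add: snd_zero a0 a1 a2 a3 a4 a5 a6 a7)
  finally show "d_rep x y z v + d_rep x y z v = 0" .
qed

lemma d2_c1: "d_c1 x y a b = 0"
proof (rule half0[OF vsV])
  have a0: "(r x (brV (r y a) b) + r x (brV b (r y a))) = 0" by (simp add: brV_swap[of "b" "r y a"] lin)
  have a1: "(r y (brV (r x b) a) + r y (brV a (r x b))) = 0" by (simp add: brV_swap[of "a" "r x b"] lin)
  have a2: "(brV (r y a) (r x b) + brV (r x b) (r y a)) = 0" by (simp add: brV_swap[of "r x b" "r y a"] lin)
  have a3: "(r y (brV (r x a) b) + r y (brV b (r x a))) = 0" by (simp add: brV_swap[of "b" "r x a"] lin)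
  have a4: "(brV (r y b) (r x a) + brV (r x a) (r y b)) = 0" by (simp add: brV_swap[of "r x a" "r y b"] lin)
  have a5: "(r y (r x (brV b a)) + r y (r x (brV a b))) = 0" by (simp add: brV_swap[of "a" "b"] lin)
  have a6: "(r x (r y (brV b a)) + r x (r y (brV a b))) = 0" by (simp add: brV_swap[of "a" "b"] lin)
  have a7: "(r (brA x y) (brV b a) + r (brA x y) (brV a b)) = 0" by (simp add: brV_swap[of "a" "b"] lin)
  have a8: "(brV (r (brA x y) b) a + brV a (r (brA x y) b)) = 0" by (simp add: brV_swap[of "a" "r (brA x y) b"] lin)
  have a9: "(brV (r (brA y x) b) a + brV (r (brA x y) b) a) = 0" by (simp add: brA_swap[of "x" "y"] lin)
  have a10: "(brV (r (brA x y) b) a + brV a (r (brA x y) b)) = 0" by (simp add: brV_swap[of "a" "r (brA x y) b"] lin)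
  have a11: "(r x (brV (r y b) a) + r x (brV a (r y b))) = 0" by (simp add: brV_swap[of "a" "r y b"] lin)
  have "d_c1 x y a b + d_c1 x y a b = - snd (Fop SB (x, 0) (y, 0) (0, a) (0, b)) - snd (Fop SB (x, 0) (y, 0) (0, b) (0, a)) - snd (Fop SB (x, 0) (y, 0) (0, b) (0, a)) - snd (Fop SB (x, 0) (0, b) (y, 0) (0, a)) - snd (Fop SB (x, 0) (0, a) (0, b) (y, 0)) - (r x (brV (r y a) b) + r x (brV b (r y a))) - (r y (brV (r x b) a) + r y (brV a (r x b))) + (brV (r y a) (r x b) + brV (r x b) (r y a)) - (r y (brV (r x a) b) + r y (brV b (r x a))) - (r y (brV (r x a) b) + r y (brV b (r x a))) + (brV (r y b) (r x a) + brV (r x a) (r y b)) - (r y (r x (brV b a)) + r y (r x (brV a b))) - (r x (r y (brV b a)) + r x (r y (brV a b))) - (r x (r y (brV b a)) + r x (r y (brV a b))) - (r x (r y (brV b a)) + r x (r y (brV a b))) + (r (brA x y) (brV b a) + r (brA x y) (brV a b)) - (brV (r (brA x y) b) a + brV a (r (brA x y) b)) - (brV (r (brA y x) b) a + brV (r (brA x y) b) a) + (brV (r (brA x y) b) a + brV a (r (brA x y) b)) - (r x (brV (r y b) a) + r x (brV a (r y b)))"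
    by (simp add: Mop_def Fop_def Aop_def Lop_def jac_def sum_br_def sum_pr_def d_defs  lin algebra_simps)
  also have "\<dots> = 0" by (simp add: snd_zero a0 a1 a2 a3 a4 a5 a6 a7 a8 a9 a10 a11)
  finally show "d_c1 x y a b + d_c1 x y a b = 0" .
qed

lemma d2_c2: "d_c2 x y a b = 0"
proof (rule half0[OF vsV])
  have a0: "(brV (r y a) (r x b) + brV (r x b) (r y a)) = 0" by (simp add: brV_swap[of "r x b" "r y a"] lin)
  have a1: "(r y (brV (r x b) a) + r y (brV a (r x b))) = 0" by (simp add: brV_swap[of "a" "r x b"] lin)
  have a2: "(r x (brV (r y b) a) + r x (brV a (r y b))) = 0" by (simp add: brV_swap[of "a" "r y b"] lin)
  have a3: "(r (brA x y) (brV b a) + r (brA x y) (brV a b)) = 0" by (simp add: brV_swap[of "a" "b"] lin)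
  have a4: "(r y (r x (brV b a)) + r y (r x (brV a b))) = 0" by (simp add: brV_swap[of "a" "b"] lin)
  have a5: "(r x (r y (brV b a)) + r x (r y (brV a b))) = 0" by (simp add: brV_swap[of "a" "b"] lin)
  have a6: "(brV (r y b) (r x a) + brV (r x a) (r y b)) = 0" by (simp add: brV_swap[of "r x a" "r y b"] lin)
  have a7: "(brV (r (brA x y) b) a + brV a (r (brA x y) b)) = 0" by (simp add: brV_swap[of "a" "r (brA x y) b"] lin)
  have a8: "(brV (r (brA y x) b) a + brV (r (brA x y) b) a) = 0" by (simp add: brA_swap[of "x" "y"] lin)
  have a9: "(brV (r (brA x y) b) a + brV a (r (brA x y) b)) = 0" by (simp add: brV_swap[of "a" "r (brA x y) b"] lin)
  have a10: "(r x (brV (r y a) b) + r x (brV b (r y a))) = 0" by (simp add: brV_swap[of "b" "r y a"] lin)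
  have "d_c2 x y a b + d_c2 x y a b = snd (Fop SB (x, 0) (y, 0) (0, a) (0, b)) + snd (Fop SB (x, 0) (0, b) (y, 0) (0, a)) - snd (Fop SB (x, 0) (0, a) (0, b) (y, 0)) - (brV (r y a) (r x b) + brV (r x b) (r y a)) + (r y (brV (r x b) a) + r y (brV a (r x b))) + (r x (brV (r y b) a) + r x (brV a (r y b))) - (r (brA x y) (brV b a) + r (brA x y) (brV a b)) - (r y (r x (brV b a)) + r y (r x (brV a b))) + (r x (r y (brV b a)) + r x (r y (brV a b))) + (brV (r y b) (r x a) + brV (r x a) (r y b)) - (brV (r (brA x y) b) a + brV a (r (brA x y) b)) - (brV (r (brA y x) b) a + brV (r (brA x y) b) a) + (brV (r (brA x y) b) a + brV a (r (brA x y) b)) + (r x (brV (r y a) b) + r x (brV b (r y a)))"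
    by (simp add: Mop_def Fop_def Aop_def Lop_def jac_def sum_br_def sum_pr_def d_defs  lin algebra_simps)
  also have "\<dots> = 0" by (simp add: snd_zero a0 a1 a2 a3 a4 a5 a6 a7 a8 a9 a10)
  finally show "d_c2 x y a b + d_c2 x y a b = 0" .
qed

lemma d2_c3: "d_c3 x a b c = 0"
proof (rule half0[OF vsV])
  have a0: "(brV (r x a) (brV b c) + brV (brV b c) (r x a)) = 0" by (simp add: brV_swap[of "brV b c" "r x a"] lin)
  have a1: "(r x (brV (brV b a) c) + r x (brV (brV a b) c)) = 0" by (simp add: brV_swap[of "a" "b"] lin)
  have a2: "(r x (brV (brV a b) c) + r x (brV c (brV a b))) = 0" by (simp add: brV_swap[of "c" "brV a b"] lin)
  have a3: "(brV (r x (brV a c)) b + brV b (r x (brV a c))) = 0" by (simp add: brV_swap[of "b" "r x (brV a c)"] lin)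
  have a4: "(brV (brV (r x c) b) a + brV (brV b (r x c)) a) = 0" by (simp add: brV_swap[of "b" "r x c"] lin)
  have a5: "(brV (brV b (r x c)) a + brV a (brV b (r x c))) = 0" by (simp add: brV_swap[of "a" "brV b (r x c)"] lin)
  have a6: "(brV (r x b) (brV a c) + brV (brV a c) (r x b)) = 0" by (simp add: brV_swap[of "brV a c" "r x b"] lin)
  have a7: "(brV (brV b (r x c)) a + brV a (brV b (r x c))) = 0" by (simp add: brV_swap[of "a" "brV b (r x c)"] lin)
  have a8: "(brV (brV (r x b) c) a + brV (brV c (r x b)) a) = 0" by (simp add: brV_swap[of "c" "r x b"] lin)
  have a9: "(brV (brV c (r x b)) a + brV a (brV c (r x b))) = 0" by (simp add: brV_swap[of "a" "brV c (r x b)"] lin)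
  have a10: "(brV (r x (brV b c)) a + brV a (r x (brV b c))) = 0" by (simp add: brV_swap[of "a" "r x (brV b c)"] lin)
  have a11: "(r x (brV (brV a b) c) + r x (brV c (brV a b))) = 0" by (simp add: brV_swap[of "c" "brV a b"] lin)
  have a12: "(r x (brV (brV c a) b) + r x (brV (brV a c) b)) = 0" by (simp add: brV_swap[of "a" "c"] lin)
  have a13: "(r x (brV (brV a c) b) + r x (brV b (brV a c))) = 0" by (simp add: brV_swap[of "b" "brV a c"] lin)
  have a14: "(r x (brV (brV b c) a) + r x (brV a (brV b c))) = 0" by (simp add: brV_swap[of "a" "brV b c"] lin)
  have a15: "(brV (r x c) (brV a b) + brV (brV a b) (r x c)) = 0" by (simp add: brV_swap[of "brV a b" "r x c"] lin)
  have a16: "(brV (r x (brV a b)) c + brV c (r x (brV a b))) = 0" by (simp add: brV_swap[of "c" "r x (brV a b)"] lin)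
  have a17: "(brV (brV c (r x b)) a + brV a (brV c (r x b))) = 0" by (simp add: brV_swap[of "a" "brV c (r x b)"] lin)
  have a18: "(brV (r x (brV c b)) a + brV (r x (brV b c)) a) = 0" by (simp add: brV_swap[of "b" "c"] lin)
  have a19: "(brV (r x (brV b c)) a + brV a (r x (brV b c))) = 0" by (simp add: brV_swap[of "a" "r x (brV b c)"] lin)
  have a20: "(r x (brV (brV a c) b) + r x (brV b (brV a c))) = 0" by (simp add: brV_swap[of "b" "brV a c"] lin)
  have a21: "(r x (brV (brV c b) a) + r x (brV (brV b c) a)) = 0" by (simp add: brV_swap[of "b" "c"] lin)
  have a22: "(r x (brV (brV b c) a) + r x (brV a (brV b c))) = 0" by (simp add: brV_swap[of "a" "brV b c"] lin)
  have a23: "(brV (r x c) (brV b a) + brV (r x c) (brV a b)) = 0" by (simp add: brV_swap[of "a" "b"] lin)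
  have a24: "(brV (r x c) (brV a b) + brV (brV a b) (r x c)) = 0" by (simp add: brV_swap[of "brV a b" "r x c"] lin)
  have a25: "(brV (r x (brV b a)) c + brV (r x (brV a b)) c) = 0" by (simp add: brV_swap[of "a" "b"] lin)
  have a26: "(brV (r x (brV a b)) c + brV c (r x (brV a b))) = 0" by (simp add: brV_swap[of "c" "r x (brV a b)"] lin)
  have a27: "(r x (brV c (brV b a)) + r x (brV c (brV a b))) = 0" by (simp add: brV_swap[of "a" "b"] lin)
  have a28: "(brV (brV c (r x a)) b + brV b (brV c (r x a))) = 0" by (simp add: brV_swap[of "b" "brV c (r x a)"] lin)
  have a29: "(brV (brV (r x a) c) b + brV (brV c (r x a)) b) = 0" by (simp add: brV_swap[of "c" "r x a"] lin)
  have a30: "(brV (brV c (r x a)) b + brV b (brV c (r x a))) = 0" by (simp add: brV_swap[of "b" "brV c (r x a)"] lin)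
  have a31: "(brV (r x (brV c a)) b + brV (r x (brV a c)) b) = 0" by (simp add: brV_swap[of "a" "c"] lin)
  have a32: "(brV (r x (brV a c)) b + brV b (r x (brV a c))) = 0" by (simp add: brV_swap[of "b" "r x (brV a c)"] lin)
  have a33: "(brV (r x a) (brV c b) + brV (r x a) (brV b c)) = 0" by (simp add: brV_swap[of "b" "c"] lin)
  have a34: "(brV (r x a) (brV b c) + brV (brV b c) (r x a)) = 0" by (simp add: brV_swap[of "brV b c" "r x a"] lin)
  have a35: "(r x (brV a (brV c b)) + r x (brV a (brV b c))) = 0" by (simp add: brV_swap[of "b" "c"] lin)
  have a36: "(brV (brV c a) (r x b) + brV (brV a c) (r x b)) = 0" by (simp add: brV_swap[of "a" "c"] lin)
  have a37: "(brV (brV a (r x b)) c + brV c (brV a (r x b))) = 0" by (simp add: brV_swap[of "c" "brV a (r x b)"] lin)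
  have a38: "(brV (brV (r x b) a) c + brV (brV a (r x b)) c) = 0" by (simp add: brV_swap[of "a" "r x b"] lin)
  have a39: "(brV (brV a (r x b)) c + brV c (brV a (r x b))) = 0" by (simp add: brV_swap[of "c" "brV a (r x b)"] lin)
  have "d_c3 x a b c + d_c3 x a b c = - snd (Fop SB (x, 0) (0, a) (0, b) (0, c)) - snd (Fop SB (x, 0) (0, a) (0, c) (0, b)) - snd (Fop SB (x, 0) (0, a) (0, c) (0, b)) - snd (Fop SB (x, 0) (0, b) (0, c) (0, a)) - snd (Fop SB (x, 0) (0, c) (0, a) (0, b)) + (brV (r x a) (brV b c) + brV (brV b c) (r x a)) + (brV (r x a) (brV b c) + brV (brV b c) (r x a)) + (r x (brV (brV b a) c) + r x (brV (brV a b) c)) + (r x (brV (brV b a) c) + r x (brV (brV a b) c)) + (r x (brV (brV b a) c) + r x (brV (brV a b) c)) + (r x (brV (brV b a) c) + r x (brV (brV a b) c)) - (r x (brV (brV a b) c) + r x (brV c (brV a b))) - (r x (brV (brV a b) c) + r x (brV c (brV a b))) - (r x (brV (brV a b) c) + r x (brV c (brV a b))) - (r x (brV (brV a b) c) + r x (brV c (brV a b))) + (brV (r x (brV a c)) b + brV b (r x (brV a c))) + (brV (brV (r x c) b) a + brV (brV b (r x c)) a) - (brV (brV b (r x c)) a + brV a (brV b (r x c))) + (brV (r x b) (brV a c) + brV (brV a c) (r x b)) + (brV (brV b (r x c)) a + brV a (brV b (r x c))) + (brV (brV (r x b) c) a + brV (brV c (r x b)) a) + (brV (brV (r x b) c)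 a + brV (brV c (r x b)) a) - (brV (brV c (r x b)) a + brV a (brV c (r x b))) - (brV (brV c (r x b)) a + brV a (brV c (r x b))) + (brV (r x (brV b c)) a + brV a (r x (brV b c))) + (r x (brV (brV a b) c) + r x (brV c (brV a b))) + (r x (brV (brV a b) c) + r x (brV c (brV a b))) + (r x (brV (brV a b) c) + r x (brV c (brV a b))) + (r x (brV (brV c a) b) + r x (brV (brV a c) b)) + (r x (brV (brV c a) b) + r x (brV (brV a c) b)) + (r x (brV (brV c a) b) + r x (brV (brV a c) b)) - (r x (brV (brV a c) b) + r x (brV b (brV a c))) - (r x (brV (brV a c) b) + r x (brV b (brV a c))) - (r x (brV (brV a c) b) + r x (brV b (brV a c))) + (r x (brV (brV b c) a) + r x (brV a (brV b c))) + (r x (brV (brV b c) a) + r x (brV a (brV b c))) + (r x (brV (brV b c) a) + r x (brV a (brV b c))) + (brV (r x c) (brV a b) + brV (brV a b) (r x c)) + (brV (r x c) (brV a b) + brV (brV a b) (r x c)) - (brV (r x (brV a b)) c + brV c (r x (brV a b))) + (brV (brV c (r x b)) a + brV a (brV c (r x b))) + (brV (brV c (r x b)) a + brV a (brV c (r x b))) + (brV (r x (brV c b)) a + brV (r x (brV b c)) a) - (brV (r x (brV b c)) a + brV a (r x (brV b c))) + (r x (brV (brV a c) b) + r x (brV b (brV a c))) + (r x (brV (brV a c) b) + r x (brV b (brV a c))) + (r x (brV (brV c b) a) + r x (brV (brV b c) a)) + (r x (brV (brV c b) a) + r x (brV (brV b c) a)) - (r x (brV (brV b c) a) + r x (brV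 a (brV b c))) - (r x (brV (brV b c) a) + r x (brV a (brV b c))) + (brV (r x c) (brV b a) + brV (r x c) (brV a b)) - (brV (r x c) (brV a b) + brV (brV a b) (r x c)) - (brV (r x (brV b a)) c + brV (r x (brV a b)) c) + (brV (r x (brV a b)) c + brV c (r x (brV a b))) - (r x (brV c (brV b a)) + r x (brV c (brV a b))) + (brV (brV c (r x a)) b + brV b (brV c (r x a))) + (brV (brV (r x a) c) b + brV (brV c (r x a)) b) - (brV (brV c (r x a)) b + brV b (brV c (r x a))) + (brV (r x (brV c a)) b + brV (r x (brV a c)) b) - (brV (r x (brV a c)) b + brV b (r x (brV a c))) + (brV (r x a) (brV c b) + brV (r x a) (brV b c)) - (brV (r x a) (brV b c) + brV (brV b c) (r x a)) - (r x (brV a (brV c b)) + r x (brV a (brV b c))) + (brV (brV c a) (r x b) + brV (brV a c) (r x b)) + (brV (brV a (r x b)) c + brV c (brV a (r x b))) + (brV (brV (r x b) a) c + brV (brV a (r x b)) c) - (brV (brV a (r x b)) c + brV c (brV a (r x b)))"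
    by (simp add: Mop_def Fop_def Aop_def Lop_def jac_def sum_br_def sum_pr_def d_defs  lin algebra_simps)
  also have "\<dots> = 0" by (simp add: snd_zero a0 a1 a2 a3 a4 a5 a6 a7 a8 a9 a10 a11 a12 a13 a14 a15 a16 a17 a18 a19 a20 a21 a22 a23 a24 a25 a26 a27 a28 a29 a30 a31 a32 a33 a34 a35 a36 a37 a38 a39)
  finally show "d_c3 x a b c + d_c3 x a b c = 0" .
qed

lemma d2_arep: "d_arep x y v = 0"
proof -
  have "d_arep x y v = snd (Aop SP (x, 0) (y, 0) (0, v))"
    by (simp add: Mop_def Fop_def Aop_def Lop_def jac_def sum_br_def sum_pr_def d_defs  lin algebra_simps)
  also have "\<dots> = 0" by (simp add: snd_zero )
  finally show ?thesis .
qed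

lemma d2_mp1: "d_mp1 x y v = 0"
proof -
  have "d_mp1 x y v = - snd (Lop SB SP (0, v) (x, 0) (y, 0))"
    by (simp add: Mop_def Fop_def Aop_def Lop_def jac_def sum_br_def sum_pr_def d_defs  lin algebra_simps)
  also have "\<dots> = 0" by (simp add: snd_zero )
  finally show ?thesis .
qed

lemma d2_mp2: "d_mp2 x y v = 0"
proof -
  have "d_mp2 x y v = - snd (Lop SB SP (x, 0) (y, 0) (0, v))"
    by (simp add: Mop_def Fop_def Aop_def Lop_def jac_def sum_br_def sum_pr_def d_defs  lin algebra_simps)
  also have "\<dots> = 0" by (simp add: snd_zero )
  finally show ?thesis .
qed

lemma d2_massoc: "d_massoc x a b = 0"
proof -
  have "d_massoc x a b = - snd (Aop SP (x, 0) (0, a) (0, b))"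
    by (simp add: Mop_def Fop_def Aop_def Lop_def jac_def sum_br_def sum_pr_def d_defs  lin algebra_simps)
  also have "\<dots> = 0" by (simp add: snd_zero )
  finally show ?thesis .
qed

lemma d2_der: "d_der x a b = 0"
proof -
  have "d_der x a b = snd (Lop SB SP (x, 0) (0, a) (0, b))"
    by (simp add: Mop_def Fop_def Aop_def Lop_def jac_def sum_br_def sum_pr_def d_defs  lin algebra_simps)
  also have "\<dots> = 0" by (simp add: snd_zero )
  finally show ?thesis .
qed

lemma d2_lmix: "d_lmix x a b = 0"
proof -
  have "d_lmix x a b = snd (Lop SB SP (0, a) (x, 0) (0, b))"
    by (simp add: Mop_def Fop_def Aop_def Lop_def jac_def sum_br_def sum_pr_def d_defs  lin algebra_simps)
  also have "\<dots> = 0" by (simp add: snd_zero )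
  finally show ?thesis .
qed

lemma dir2: "module_mp sA brA prA sV prV brV m r"
  unfolding module_mp_def module_malcev_def malcev_rep_def module_assoc_def assoc_rep_def mp_rep_def
  by (intro conjI allI linr linm
      d2_rep[unfolded d_rep_def right_minus_eq]
      d2_c1[unfolded d_c1_def right_minus_eq]
      d2_c2[unfolded d_c2_def right_minus_eq]
      d2_c3[unfolded d_c3_def right_minus_eq]
      d2_arep[unfolded d_arep_def right_minus_eq]
      d2_massoc[unfolded d_massoc_def right_minus_eq]
      d2_mp1[unfolded d_mp1_def right_minus_eq]
      d2_mp2[unfolded d_mp2_def right_minus_eq]
      d2_der[unfolded d_der_def right_minus_eq]
      d2_lmix[unfolded d_lmix_def right_minus_eq])

end

end

theorem mainTheorem5:
  fixes sA :: "'k::field_char_0 \<Rightarrow> 'a::ab_group_add \<Rightarrow> 'a"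
    and sV :: "'k \<Rightarrow> 'v::ab_group_add \<Rightarrow> 'v"
    and brA prA :: "'a \<Rightarrow> 'a \<Rightarrow> 'a"
    and brV prV :: "'v \<Rightarrow> 'v \<Rightarrow> 'v"
    and r m :: "'a \<Rightarrow> 'v \<Rightarrow> 'v"
  assumes "alg_closed TYPE('k)"
    and "fin_dim sA" and "fin_dim sV"
    and "malcev_poisson sA brA prA"
    and "malcev_poisson sV brV prV"
    and "lin_end sA sV r" and "lin_end sA sV m"
  shows "module_mp sA brA prA sV prV brV m r \<longleftrightarrow>
         malcev_poisson (sum_scale sA sV) (sum_br brA brV r) (sum_pr prA prV m)"
proof -
  interpret MPS sA sV brA prA brV prV r m
    by unfold_locales (rule assms)+
  show ?thesis using dir1 dir2 by blast
qed

end
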